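(* Let $k\geq 2$ and $n\geq k+1$ be integers. Then in $\mathcal{H}$, $$ \sum_{\substack{r, s_i\geq 1,\ s_1\geq 2\\ r+s_1+\cdots +s_{k-1}=n}} z_{r}\,\tilde{\sqcup}\, z_{s_1,\dots, s_{k-1}} = \sum_{\substack{t_i\geq 1\\ t_1+\cdots+t_{k}=n }} \big[ C(t_1,\dots, t_{k-1})- C(t_2,\dots, t_{k-1})\big] z_{t_1,\dots, t_{k}} - \sum_{ \substack{ t_i\geq 1,\ t_2=1 \\ t_1+\cdots+t_{k}=n }} z_{t_1,\dots, t_{k}}, $$ with the convention $C(t_2,\dots,t_{k-1})=C(\emptyset)=1$ when $k=2$.
   Context: Let $\mathcal{H}$ be the free $\mathbb{Z}$-module on words in letters $z_s$ ($s\geq1$), with $z_{s_1,\dots,s_k}:=z_{s_1}\cdots z_{s_k}$ and $1$ the empty word. Let $\mathbb{Z}\langle x_0,x_1\rangle$ be the free $\mathbb{Z}$-module on words in two letters $x_0,x_1$, with the shuffle product $\sqcup$ defined bilinearly and recursively by $1\sqcup u=u\sqcup 1=u$ and $(au)\sqcup(bv)=a(u\sqcup (bv))+b((au)\sqcup v)$ for letters $a,b\in\{x_0,x_1\}$ and words $u,v$. Let $\rho$ be the $\mathbb{Z}$-linear bijection from $\mathbb{Z}\oplus \mathbb{Z}\langle x_0,x_1\rangle x_1$ (span of $1$ and words ending in $x_1$) onto $\mathcal{H}$ given by $\rho(1)=1$ and $\rho(x_0^{s_1-1}x_1\cdots x_0^{s_k-1}x_1)=z_{s_1,\dots,s_k}$.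 Define the product $\tilde{\sqcup}$ on $\mathcal{H}$ by $w_1\,\tilde{\sqcup}\,w_2=\rho\big(\rho^{-1}(w_1)\sqcup\rho^{-1}(w_2)\big)$. For $m\geq 1$ and positive integers $t_1,\dots,t_{m}$ with $T_j=t_1+\cdots+t_j$, set $C(t_1,\dots,t_{m})=\sum_{j=1}^{m}2^{T_j-j}+2^{T_{m}-m}$; also $C(\emptyset)=1$. In particular $C(t_2,\dots,t_{k-1})$ denotes this quantity applied to the tuple $(t_2,\dots,t_{k-1})$. *)

theory Defs
  imports Main "HOL-Library.Function_Algebras"
begin

text \<open>Elements of the free Z-module H are represented by their coefficient functions
  nat list \<Rightarrow> int; the word z_{s1,...,sk} is the list [s1,...,sk] of positive integers.
  Words in x0, x1 are bool lists with x0 = False, x1 = True.\<close>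

type_synonym hword = "nat list"
type_synonym helt = "hword \<Rightarrow> int"

definition zb :: "hword \<Rightarrow> helt" where
  "zb u = (\<lambda>w. if w = u then 1 else 0)"

definition scal :: "int \<Rightarrow> helt \<Rightarrow> helt" where
  "scal c f = (\<lambda>w. c * f w)"

text \<open>Shuffle of two words, as a list of words counted with multiplicity.\<close>
fun shuf :: "'a list \<Rightarrow> 'a list \<Rightarrow> 'a list list" where
  "shuf [] v = [v]"
| "shuf u [] = [u]"
| "shuf (a # u) (b # v) = map ((#) a) (shuf u (b # v)) @ map ((#) b) (shuf (a # u) v)"

text \<open>rho inverse: z_{s1..sk} \<mapsto> x0^(s1-1) x1 ... x0^(sk-1) x1.\<close>
definition enc :: "hword \<Rightarrow> bool list" where
  "enc ss = concat (map (\<lambda>s. replicate (s - 1) False @ [True]) ss)"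

text \<open>z_u tilde-shuffle z_v = rho(rho^-1(z_u) shuffle rho^-1(z_v)); the coefficient of z_w
  is the multiplicity of rho^-1(z_w) in the shuffle.\<close>
definition shz :: "hword \<Rightarrow> hword \<Rightarrow> helt" where
  "shz u v = (\<lambda>w. if (\<forall>x\<in>set w. 0 < x)
                 then int (count_list (shuf (enc u) (enc v)) (enc w)) else 0)"

definition Cf :: "nat list \<Rightarrow> int" where
  "Cf ts = (if ts = [] then 1 else
     (\<Sum>j=1..length ts. 2 ^ (sum_list (take j ts) - j)) + 2 ^ (sum_list ts - length ts))"

end

theory Submission imports Defs begin

fun unsh :: "'a list \<Rightarrow> ('a list \<times> 'a list) list" where
  "unsh [] = [([],[])]"
| "unsh (c # u) = map (\<lambda>(p,q). (c # p, q)) (unsh u) @ map (\<lambda>(p,q). (p, c # q)) (unsh u)"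

lemma shuf_nil2[simp]: "shuf p [] = [p]"
  by (cases p) auto

lemma shuf_len: "x \<in> set (shuf p q) \<Longrightarrow> length x = length p + length q"
  by (induction p q arbitrary: x rule: shuf.induct) auto

lemma cl_map_cons: "count_list (map ((#) a) xs) (c # u) = (if a = c then count_list xs u else 0)"
  by (induction xs) auto

lemma cl_map_cons_nil: "count_list (map ((#) a) xs) [] = 0"
  by (induction xs) auto

lemma cl_map_l: "count_list (map (\<lambda>(p,q). (c # p, q)) xs) (p', q') =
   (case p' of [] \<Rightarrow> 0 | d # r \<Rightarrow> if d = c then count_list xs (r, q') else 0)"
  by (induction xs) (auto split: list.splits)

lemma cl_map_r: "count_list (map (\<lambda>(p,q). (p, c # q)) xs) (p', q') =
   (case q' of [] \<Rightarrow> 0 | d # r \<Rightarrow> if d = c then count_list xs (p', r) else 0)"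
  by (induction xs) (auto split: list.splits)

lemma shuf_unsh: "count_list (shuf p q) u = count_list (unsh u) (p, q)"
proof (induction u arbitrary: p q)
  case Nil
  show ?case
  proof (cases "p = [] \<and> q = []")
    case True then show ?thesis by simp
  next
    case False
    then have "[] \<notin> set (shuf p q)" using shuf_len by fastforce
    then show ?thesis using False by (auto simp: count_list_0_iff)
  qed
next
  case (Cons c u)
  show ?case
  proof (cases p)
    case Nil
    have IH: "\<And>q. count_list (unsh u) ([], q) = (if q = u then 1 else 0)"
      proof -
      fix q
      have "count_list (unsh u) ([], q) = count_list (shuf [] q) u" by (rule Cons.IH[of "[]" q, symmetric])
      then show "count_list (unsh u) ([], q) = (if q = u then 1 else 0)" by simp
    qed
    then show ?thesis using Nil
      by (cases q) (auto simp: cl_map_l cl_map_r)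
  next
    case (Cons a p')
    show ?thesis
    proof (cases q)
      case Nil
      have IH: "\<And>p. count_list (unsh u) (p, []) = (if p = u then 1 else 0)"
      proof -
        fix p
        have "count_list (unsh u) (p, []) = count_list (shuf p []) u" by (rule Cons.IH[of p "[]", symmetric])
        then show "count_list (unsh u) (p, []) = (if p = u then 1 else 0)" by simp
      qed
      then show ?thesis using Nil \<open>p = a # p'\<close>
        by (auto simp: cl_map_l cl_map_r)
    next
      case (Cons b q')
      then show ?thesis using \<open>p = a # p'\<close> Cons.IH
        by (auto simp: cl_map_l cl_map_r cl_map_cons)
    qed
  qed
qed

lemma sum_count: "finite B \<Longrightarrow> (\<Sum>y\<in>B. count_list xs y) = length (filter (\<lambda>z. z \<in> B) xs)"
proof (induction xs)
  case Nil then show ?case by simp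
next
  case (Cons x xs)
  have "(\<Sum>y\<in>B. count_list (x # xs) y) = (\<Sum>y\<in>B. (if x = y then 1 else 0) + count_list xs y)"
    by (rule sum.cong) auto
  also have "\<dots> = (if x \<in> B then 1 else 0) + (\<Sum>y\<in>B. count_list xs y)"
    using Cons.prems by (simp add: sum.distrib)
  finally show ?case using Cons by simp
qed

definition NN :: "bool list \<Rightarrow> (bool list \<times> bool list \<Rightarrow> bool) \<Rightarrow> nat" where
  "NN u P = length (filter P (unsh u))"

lemma NN_cons: "NN (c # u) P = NN u (\<lambda>(p,q). P (c # p, q)) + NN u (\<lambda>(p,q). P (p, c # q))"
  by (simp add: NN_def filter_map comp_def split_def)

lemma NN_nil: "NN [] P = (if P ([],[]) then 1 else 0)"
  by (simp add: NN_def)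

lemma NN_false: "NN u (\<lambda>(p,q). False) = 0"
  by (simp add: NN_def)

lemma filter_disj: "(\<And>x. \<not> (P x \<and> R x)) \<Longrightarrow> length (filter (\<lambda>x. P x \<or> R x) xs) = length (filter P xs) + length (filter R xs)"
  by (induction xs) auto

lemma NN_disj: "(\<And>x. \<not> (P x \<and> R x)) \<Longrightarrow> NN u (\<lambda>x. P x \<or> R x) = NN u P + NN u R"
  unfolding NN_def by (rule filter_disj)

lemma NN_p_nil: "NN u (\<lambda>(p,q). p = [] \<and> R q) = (if R u then 1 else 0)"
proof (induction u arbitrary: R)
  case Nil then show ?case by (simp add: NN_nil)
next
  case (Cons c u)
  have "NN (c # u) (\<lambda>(p,q). p = [] \<and> R q) = NN u (\<lambda>(p,q). False) + NN u (\<lambda>(p,q). p = [] \<and> R (c # q))"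
    by (simp add: NN_cons)
  then show ?case using Cons[of "\<lambda>q. R (c # q)"] by (simp add: NN_false)
qed

lemma NN_q_nil: "NN u (\<lambda>(p,q). q = [] \<and> R p) = (if R u then 1 else 0)"
proof (induction u arbitrary: R)
  case Nil then show ?case by (simp add: NN_nil)
next
  case (Cons c u)
  have "NN (c # u) (\<lambda>(p,q). q = [] \<and> R p) = NN u (\<lambda>(p,q). q = [] \<and> R (c # p)) + NN u (\<lambda>(p,q). False)"
    by (simp add: NN_cons)
  then show ?case using Cons[of "\<lambda>q. R (c # q)"] by (simp add: NN_false)
qed

fun ft :: "bool list \<Rightarrow> bool" where
  "ft [] = False"
| "ft (c # p) = (if c then p = [] else ft p)"

definition Q1 :: "bool list \<Rightarrow> bool" where "Q1 q = (q \<noteq> [] \<and> hd q = False \<and> last q = True)"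
definition Q2 :: "bool list \<Rightarrow> bool" where "Q2 q = (q \<noteq> [] \<and> last q = True)"

lemma Q1_F[simp]: "Q1 (False # q) = Q2 q" by (simp add: Q1_def Q2_def)
lemma Q1_T[simp]: "Q1 (True # q) = False" by (simp add: Q1_def)
lemma Q2_F[simp]: "Q2 (False # q) = Q2 q" by (simp add: Q2_def)
lemma Q2_T: "Q2 (True # q) = (q = [] \<or> Q2 q)" by (simp add: Q2_def)

definition N1 where "N1 u = NN u (\<lambda>(p,q). ft p \<and> Q1 q)"
definition N2 where "N2 u = NN u (\<lambda>(p,q). ft p \<and> Q2 q)"
definition N3 where "N3 u = NN u (\<lambda>(p,q). q = [] \<and> ft p)"

lemma N3_eq: "N3 u = (if ft u then 1 else 0)"
  unfolding N3_def by (rule NN_q_nil)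

lemma N1_T: "N1 (True # u) = (if Q1 u then 1 else 0)"
proof -
  have "N1 (True # u) = NN u (\<lambda>(p,q). p = [] \<and> Q1 q) + NN u (\<lambda>(p,q). False)"
    by (simp add: N1_def NN_cons)
  then show ?thesis by (simp add: NN_false NN_p_nil)
qed

lemma N1_F: "N1 (False # u) = N1 u + N2 u"
proof -
  have "N1 (False # u) = NN u (\<lambda>(p,q). ft p \<and> Q1 q) + NN u (\<lambda>(p,q). ft p \<and> Q2 q)"
    by (simp add: N1_def NN_cons)
  then show ?thesis by (simp add: N1_def N2_def)
qed

lemma N2_F: "N2 (False # u) = 2 * N2 u"
proof -
  have "N2 (False # u) = NN u (\<lambda>(p,q). ft p \<and> Q2 q) + NN u (\<lambda>(p,q). ft p \<and> Q2 q)"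
    by (simp add: N2_def NN_cons)
  then show ?thesis by (simp add: N2_def)
qed

lemma N2_T: "N2 (True # u) = (if Q2 u then 1 else 0) + N2 u + N3 u"
proof -
  have e: "(\<lambda>(p,q). ft p \<and> Q2 (True # q)) = (\<lambda>x. (\<lambda>(p,q). q = [] \<and> ft p) x \<or> (\<lambda>(p,q). ft p \<and> Q2 q) x)"
    by (auto simp: Q2_def fun_eq_iff)
  have "N2 (True # u) = NN u (\<lambda>(p,q). p = [] \<and> Q2 q) + NN u (\<lambda>(p,q). ft p \<and> Q2 (True # q))"
    by (simp add: N2_def NN_cons)
  also have "NN u (\<lambda>(p,q). ft p \<and> Q2 (True # q)) = N3 u + N2 u"
    unfolding e N2_def N3_def by (rule NN_disj) (auto simp: Q2_def)
  finally show ?thesis by (simp add: NN_p_nil)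
qed

lemma N1_nil: "N1 [] = 0" by (simp add: N1_def NN_nil)
lemma N2_nil: "N2 [] = 0" by (simp add: N2_def NN_nil)

lemma N2_rep: "N2 (replicate m False @ u) = 2 ^ m * N2 u"
  by (induction m) (auto simp: N2_F)

lemma N1_rep: "N1 (replicate m False @ u) + N2 u = N1 u + 2 ^ m * N2 u"
  by (induction m) (auto simp: N1_F N2_rep)

lemma enc_nil[simp]: "enc [] = []" by (simp add: enc_def)
lemma enc_cons: "enc (a # t) = replicate (a - 1) False @ True # enc t" by (simp add: enc_def)
lemma enc_eq_nil[simp]: "enc t = [] \<longleftrightarrow> t = []" by (cases t) (auto simp: enc_cons)

lemma ft_rep: "ft (replicate m False @ True # v) = (v = [])"
  by (induction m) auto

lemma ft_enc: "ft (enc t) = (length t = 1)"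
  by (cases t) (auto simp: enc_cons ft_rep)

lemma last_rep: "last (replicate m False @ True # v) = (if v = [] then True else last v)"
  by (simp add: last_append)

lemma Q2_enc: "Q2 (enc t) = (t \<noteq> [])"
proof (induction t)
  case Nil then show ?case by (simp add: Q2_def)
next
  case (Cons a t) then show ?case by (auto simp: Q2_def enc_cons last_rep)
qed

lemma Q1_enc: "(\<forall>x\<in>set t. 0 < x) \<Longrightarrow> Q1 (enc t) = (t \<noteq> [] \<and> hd t \<ge> 2)"
proof (cases t)
  case Nil then show ?thesis by (simp add: Q1_def)
next
  case (Cons a t')
  assume pos: "\<forall>x\<in>set t. 0 < x"
  have l: "last (enc t) = True" using Q2_enc[of t] Cons by (simp add: Q2_def)
  have "hd (enc t) = False \<longleftrightarrow> a \<ge> 2" using pos Cons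
    by (cases "a - 1") (auto simp: enc_cons)
  then show ?thesis using l Cons by (auto simp: Q1_def)
qed

definition M where "M t = N2 (True # enc t)"

lemma M_eq: "M t = (if t \<noteq> [] then 1 else 0) + N2 (enc t) + (if length t = 1 then 1 else 0)"
  by (simp add: M_def N2_T Q2_enc N3_eq ft_enc)

lemma N2_enc_cons: "N2 (enc (a # t)) = 2 ^ (a - 1) * M t"
  by (simp add: enc_cons N2_rep M_def)

lemma pos_len_le_sum: "(\<forall>x\<in>set y. 0 < (x::nat)) \<Longrightarrow> length y \<le> sum_list y"
  by (induction y) auto

lemma Cf_alt: "Cf ts = (\<Sum>j=1..length ts. 2 ^ (sum_list (take j ts) - j)) + 2 ^ (sum_list ts - length ts)"
  by (simp add: Cf_def)

lemma Cf_cons: assumes a: "a \<ge> 1" and pos: "\<forall>x\<in>set y. 0 < x"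
  shows "Cf (a # y) = 2 ^ (a - 1) * (1 + Cf y)"
proof -
  let ?m = "length y"
  let ?f = "\<lambda>j. (2::int) ^ (sum_list (take j (a # y)) - j)"
  let ?h = "\<lambda>i. (2::int) ^ (sum_list (take i y) - i)"
  have ge: "i \<le> sum_list (take i y)" if "i \<le> ?m" for i
  proof -
    have "length (take i y) \<le> sum_list (take i y)"
      using pos by (intro pos_len_le_sum) (auto dest: in_set_takeD)
    then show ?thesis using that by simp
  qed
  have fs: "?f (Suc i) = 2 ^ (a - 1) * ?h i" if "i \<le> ?m" for i
  proof -
    have "sum_list (take (Suc i) (a # y)) - Suc i = (a - 1) + (sum_list (take i y) - i)"
      using ge[OF that] a by simp
    then show ?thesis by (simp add: power_add)
  qed
  have "(\<Sum>j=1..length (a # y). ?f j) = (\<Sum>i=0..?m. ?f (Suc i))"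
    by (simp add: sum.atLeast_Suc_atMost_Suc_shift del: sum.cl_ivl_Suc)
  also have "\<dots> = (\<Sum>i=0..?m. 2 ^ (a - 1) * ?h i)"
    by (intro sum.cong refl fs) simp
  also have "\<dots> = 2 ^ (a - 1) * (\<Sum>i=0..?m. ?h i)"
    by (simp add: sum_distrib_left)
  also have "(\<Sum>i=0..?m. ?h i) = ?h 0 + (\<Sum>i=1..?m. ?h i)"
    by (simp add: sum.atLeast_Suc_atMost)
  finally have s: "(\<Sum>j=1..length (a # y). ?f j) = 2 ^ (a - 1) * (1 + (\<Sum>i=1..?m. ?h i))" by simp
  have l: "sum_list (a # y) - length (a # y) = (a - 1) + (sum_list y - ?m)"
    using pos_len_le_sum[OF pos] a by simp
  show ?thesis
    unfolding Cf_alt[of "a # y"] Cf_alt[of y] s l by (simp add: power_add algebra_simps)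
qed

lemma M_nil: "M [] = 0" by (simp add: M_eq N2_nil)

lemma M_Cf: "(\<forall>x\<in>set x. 0 < x) \<Longrightarrow> x \<noteq> [] \<Longrightarrow> int (M x) = 1 + Cf (butlast x)"
proof (induction x)
  case Nil then show ?case by simp
next
  case (Cons b x)
  show ?case
  proof (cases "x = []")
    case True
    then show ?thesis by (simp add: M_eq N2_enc_cons M_nil Cf_def N2_nil)
  next
    case False
    have "int (M (b # x)) = 1 + 2 ^ (b - 1) * int (M x)"
      using False by (simp only: M_eq[of "b # x"]) (simp add: N2_enc_cons)
    also have "\<dots> = 1 + 2 ^ (b - 1) * (1 + Cf (butlast x))" using Cons False by simp
    also have "\<dots> = 1 + Cf (b # butlast x)"
      using Cons.prems by (subst Cf_cons) (auto dest: in_set_butlastD)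
    finally show ?thesis using False by simp
  qed
qed

lemma N1_main: assumes pos: "\<forall>x\<in>set (a # b # t). 0 < x"
  shows "int (N1 (enc (a # b # t))) = Cf (a # butlast (b # t)) - Cf (butlast (b # t)) - (if b = 1 then 1 else 0)"
proof -
  have "N1 (enc (a # b # t)) + N2 (True # enc (b # t)) = N1 (True # enc (b # t)) + 2 ^ (a - 1) * N2 (True # enc (b # t))"
    unfolding enc_cons[of a] by (rule N1_rep)
  then have "int (N1 (enc (a # b # t))) + int (M (b # t)) = int (N1 (True # enc (b # t))) + 2 ^ (a - 1) * int (M (b # t))"
    unfolding M_def by (metis of_nat_add of_nat_mult of_nat_numeral of_nat_power)
  moreover have "int (N1 (True # enc (b # t))) = (if b \<ge> 2 then 1 else 0)"
    using pos by (simp add: N1_T Q1_enc)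
  ultimately have e: "int (N1 (enc (a # b # t))) = (if b \<ge> 2 then 1 else 0) + (2 ^ (a - 1) - 1) * int (M (b # t))"
    by (simp add: algebra_simps)
  have m: "int (M (b # t)) = 1 + Cf (butlast (b # t))"
    using pos by (intro M_Cf) auto
  have c: "Cf (a # butlast (b # t)) = 2 ^ (a - 1) * (1 + Cf (butlast (b # t)))"
    using pos by (intro Cf_cons) (auto dest: in_set_butlastD)
  show ?thesis using pos unfolding e m c by (auto simp: algebra_simps)
qed

lemma unsh_set: "(p, q) \<in> set (unsh u) \<Longrightarrow>
   length p + length q = length u \<and> count_list p c + count_list q c = count_list u c"
  by (induction u arbitrary: p q) auto

lemma cl_rep_F: "count_list (replicate m False) True = 0"
  by (induction m) auto

lemma enc_len: "(\<forall>x\<in>set s. 0 < x) \<Longrightarrow> length (enc s) = sum_list s"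
  by (induction s) (auto simp: enc_cons)

lemma enc_count: "count_list (enc s) True = length s"
  by (induction s) (auto simp: enc_cons cl_rep_F)

lemma ft_imp: "ft p \<Longrightarrow> \<exists>m. p = replicate m False @ [True]"
proof (induction p)
  case Nil then show ?case by simp
next
  case (Cons c p)
  show ?case
  proof (cases c)
    case True then show ?thesis using Cons.prems by (intro exI[of _ 0]) simp
  next
    case False
    then obtain m where "p = replicate m False @ [True]" using Cons by auto
    then show ?thesis using False by (intro exI[of _ "Suc m"]) simp
  qed
qed

lemma enc_decode: "q = [] \<or> last q = True \<Longrightarrow> \<exists>s. (\<forall>x\<in>set s. 0 < x) \<and> enc s = q"
proof (induction q)
  case Nil then show ?case by (intro exI[of _ "[]"]) simp
next
  case (Cons c q)
  show ?case
  proof (cases c)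
    case True
    have "q = [] \<or> last q = True" using Cons.prems True by (cases q) auto
    then obtain s where "\<forall>x\<in>set s. 0 < x" "enc s = q" using Cons.IH by blast
    then show ?thesis using True by (intro exI[of _ "1 # s"]) (simp add: enc_cons)
  next
    case False
    then have q: "q \<noteq> [] \<and> last q = True" using Cons.prems by (cases q) auto
    then obtain s where s: "\<forall>x\<in>set s. 0 < x" "enc s = q" using Cons.IH by blast
    then obtain b s' where bs: "s = b # s'" using q by (cases s) auto
    have "enc (Suc b # s') = c # q" using s bs False by (cases b) (auto simp: enc_cons)
    then show ?thesis using s bs by (intro exI[of _ "Suc b # s'"]) auto
  qed
qed

lemma rep_inj: "replicate m False @ True # x = replicate m' False @ True # y \<Longrightarrow> m = m' \<and> x = y"
proof (induction m arbitrary: m')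
  case 0 then show ?case by (cases m') auto
next
  case (Suc m)
  then obtain m'' where m': "m' = Suc m''" by (cases m') auto
  then have "replicate m False @ True # x = replicate m'' False @ True # y" using Suc.prems by simp
  then show ?case using Suc.IH m' by blast
qed

lemma enc_inj: "(\<forall>x\<in>set s. 0 < x) \<Longrightarrow> (\<forall>x\<in>set s'. 0 < x) \<Longrightarrow> enc s = enc s' \<Longrightarrow> s = s'"
proof (induction s arbitrary: s')
  case Nil then show ?case by (metis enc_eq_nil)
next
  case (Cons a s)
  have "s' \<noteq> []" using Cons.prems(3) by (metis enc_eq_nil list.distinct(1))
  then obtain a' s'' where s': "s' = a' # s''" by (cases s') blast+
  have eq: "replicate (a - 1) False @ True # enc s = replicate (a' - 1) False @ True # enc s''"
    using Cons.prems(3) unfolding s' enc_cons .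
  have r: "a - 1 = a' - 1 \<and> enc s = enc s''" by (rule rep_inj[OF eq])
  have pa: "0 < a" "0 < a'" using Cons.prems(1,2) s' by auto
  have "a = a'" using r pa by linarith
  moreover have "s = s''"
  proof (rule Cons.IH)
    show "\<forall>x\<in>set s. 0 < x" using Cons.prems(1) by simp
    show "\<forall>x\<in>set s''. 0 < x" using Cons.prems(2) s' by simp
    show "enc s = enc s''" using r by simp
  qed
  ultimately show ?case using s' by simp
qed

lemma sum_fun_apply: "(\<Sum>x\<in>A. (f x :: helt)) w = (\<Sum>x\<in>A. f x w)"
  by (induction A rule: infinite_finite_induct) (auto simp: plus_fun_def zero_fun_def)

lemma diff_fun_apply: "((f :: helt) - g) w = f w - g w"
  by simp

lemma mult_ind: "(c::int) * (if P then 1 else 0) = (if P then c else 0)" by simp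

theorem theorem2p6:
  fixes k n :: nat
  assumes "k \<ge> 2" and "n \<ge> k + 1"
  shows "(\<Sum>(r, s) \<in> {(r, s). r \<ge> 1 \<and> length s = k - 1 \<and> (\<forall>x\<in>set s. x \<ge> 1)
                        \<and> hd s \<ge> 2 \<and> r + sum_list s = n}. shz [r] s)
       = (\<Sum>t \<in> {t. length t = k \<and> (\<forall>x\<in>set t. x \<ge> 1) \<and> sum_list t = n}.
            scal (Cf (take (k - 1) t) - Cf (drop 1 (take (k - 1) t))) (zb t))
         - (\<Sum>t \<in> {t. length t = k \<and> (\<forall>x\<in>set t. x \<ge> 1) \<and> t ! 1 = 1 \<and> sum_list t = n}.
            zb t)"
  (is "?L = ?R1 - ?R2")
proof (rule ext)
  fix w
  define A where "A = {(r, s). r \<ge> 1 \<and> length s = k - 1 \<and> (\<forall>x\<in>set s. x \<ge> 1)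
                        \<and> hd s \<ge> 2 \<and> r + sum_list s = n}"
  define B where "B = {t. length t = k \<and> (\<forall>x\<in>set t. x \<ge> 1) \<and> sum_list t = n}"
  define B1 where "B1 = {t. length t = k \<and> (\<forall>x\<in>set t. x \<ge> 1) \<and> t ! 1 = 1 \<and> sum_list t = n}"
  define c where "c t = Cf (take (k - 1) t) - Cf (drop 1 (take (k - 1) t))" for t
  have finB: "finite B"
  proof (rule finite_subset)
    show "B \<subseteq> {t. set t \<subseteq> {..n} \<and> length t = k}"
      unfolding B_def using member_le_sum_list by fastforce
  qed (rule finite_lists_length_eq, simp)
  have finB1: "finite B1"
    by (rule finite_subset[OF _ finB]) (auto simp: B_def B1_def)
  have finA: "finite A"
  proof (rule finite_subset)
    show "A \<subseteq> {..n} \<times> {t. set t \<subseteq> {..n} \<and> length t = k - 1}"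
      unfolding A_def using member_le_sum_list by fastforce
  qed (intro finite_cartesian_product finite_lists_length_eq, simp_all)
  have R1: "?R1 w = (if w \<in> B then c w else 0)"
    unfolding B_def[symmetric] c_def[symmetric] sum_fun_apply
    using finB by (simp add: scal_def zb_def mult_ind sum.delta')
  have R2: "?R2 w = (if w \<in> B1 then 1 else 0)"
    unfolding B1_def[symmetric] sum_fun_apply
    using finB1 by (simp add: zb_def sum.delta')
  show "?L w = (?R1 - ?R2) w"
  proof (cases "\<forall>x\<in>set w. 0 < x")
    case False
    then have z: "\<And>u v. shz u v w = 0" unfolding shz_def by auto
    have "?L w = 0" unfolding sum_fun_apply by (simp add: split_def z)
    moreover have "w \<notin> B" "w \<notin> B1" using False by (auto simp: B_def B1_def)
    ultimately show ?thesis using R1 R2 by simp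
  next
    case True
    define u where "u = enc w"
    define g :: "nat \<times> nat list \<Rightarrow> bool list \<times> bool list" where "g = (\<lambda>(r,s). (enc [r], enc s))"
    have posA: "\<And>r s. (r, s) \<in> A \<Longrightarrow> 0 < r \<and> (\<forall>x\<in>set s. 0 < x) \<and> length s = k - 1 \<and> hd s \<ge> 2 \<and> r + sum_list s = n"
      unfolding A_def by (auto simp: Suc_le_eq)
    have L1: "?L w = (\<Sum>x\<in>A. int (count_list (unsh u) (g x)))"
      unfolding sum_fun_apply A_def[symmetric]
      by (rule sum.cong) (auto simp: shz_def True shuf_unsh g_def u_def)
    have inj: "inj_on g A"
    proof (rule inj_onI)
      fix x y assume x: "x \<in> A" and y: "y \<in> A" and e: "g x = g y"
      obtain r s where xr: "x = (r, s)" by (cases x)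
      obtain r' s' where yr: "y = (r', s')" by (cases y)
      have "[r] = [r']" using e posA[of r s] posA[of r' s'] x y xr yr
        by (intro enc_inj) (auto simp: g_def)
      moreover have "s = s'" using e posA[of r s] posA[of r' s'] x y xr yr
        by (intro enc_inj) (auto simp: g_def)
      ultimately show "x = y" using xr yr by simp
    qed
    have L2: "(\<Sum>x\<in>A. int (count_list (unsh u) (g x))) = int (length (filter (\<lambda>z. z \<in> g ` A) (unsh u)))"
    proof -
      have "(\<Sum>x\<in>A. int (count_list (unsh u) (g x))) = int (\<Sum>x\<in>A. count_list (unsh u) (g x))"
        by simp
      also have "(\<Sum>x\<in>A. count_list (unsh u) (g x)) = (\<Sum>y\<in>g ` A. count_list (unsh u) y)"
        using sum.reindex[OF inj, of "count_list (unsh u)"] by simp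
      also have "\<dots> = length (filter (\<lambda>z. z \<in> g ` A) (unsh u))"
        using finA by (intro sum_count) simp
      finally show ?thesis .
    qed
    have lu: "length u = sum_list w" using True by (simp add: u_def enc_len)
    have cu: "count_list u True = length w" by (simp add: u_def enc_count)
    have char: "((p,q) \<in> g ` A) = (sum_list w = n \<and> length w = k \<and> ft p \<and> Q1 q)"
      if pq: "(p,q) \<in> set (unsh u)" for p q
    proof -
      have ul: "length p + length q = length u" and uc: "count_list p True + count_list q True = count_list u True"
        using unsh_set[OF pq] by auto
      show ?thesis
      proof
        assume "(p,q) \<in> g ` A"
        then obtain r s where rs: "(r,s) \<in> A" "p = enc [r]" "q = enc s" by (auto simp: g_def)
        note P = posA[OF rs(1)]
        have "length p = r" using rs P by (simp add: enc_len)
        moreover have "length q = sum_list s" using rs P by (simp add: enc_len)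
        moreover have "count_list p True = 1" using rs by (simp add: enc_count)
        moreover have "count_list q True = k - 1" using rs P by (simp add: enc_count)
        moreover have "ft p" using rs P by (simp add: enc_cons ft_rep)
        moreover have "Q1 q" using rs P \<open>k \<ge> 2\<close> Q1_enc[of s] by auto
        ultimately show "sum_list w = n \<and> length w = k \<and> ft p \<and> Q1 q"
          using ul uc lu cu P \<open>k \<ge> 2\<close> by auto
      next
        assume H: "sum_list w = n \<and> length w = k \<and> ft p \<and> Q1 q"
        then obtain m where m: "p = replicate m False @ [True]" using ft_imp by blast
        have "last q = True" using H by (simp add: Q1_def)
        then obtain s where s: "\<forall>x\<in>set s. 0 < x" "enc s = q" using enc_decode by blast
        have sh: "s \<noteq> [] \<and> hd s \<ge> 2" using H s Q1_enc by blast
        have pe: "p = enc [Suc m]" using m by (simp add: enc_cons)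
        have "count_list p True = 1" using m by (simp add: cl_rep_F)
        moreover have "count_list q True = length s" using s(2) enc_count[of s] by simp
        moreover have "length p = Suc m" using m by simp
        moreover have "length q = sum_list s" using s enc_len[of s] by simp
        ultimately have "length s = k - 1" "Suc m + sum_list s = n" using ul uc lu cu H by auto
        then have "(Suc m, s) \<in> A" using s sh unfolding A_def by (auto simp: Suc_le_eq)
        then show "(p,q) \<in> g ` A" using pe s by (force simp: g_def)
      qed
    qed
    have L3: "length (filter (\<lambda>z. z \<in> g ` A) (unsh u)) = (if sum_list w = n \<and> length w = k then N1 u else 0)"
    proof -
      have "filter (\<lambda>z. z \<in> g ` A) (unsh u) = filter (\<lambda>(p,q). (sum_list w = n \<and> length w = k) \<and> ft p \<and> Q1 q) (unsh u)"
      proof (rule filter_cong[OF refl])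
        fix x assume xin: "x \<in> set (unsh u)"
        obtain p q where x: "x = (p, q)" by (cases x)
        have "((p,q) \<in> g ` A) = (sum_list w = n \<and> length w = k \<and> ft p \<and> Q1 q)"
          using xin x char by blast
        then show "(x \<in> g ` A) = (case x of (p,q) \<Rightarrow> (sum_list w = n \<and> length w = k) \<and> ft p \<and> Q1 q)"
          by (simp only: x case_prod_conv conj_assoc)
      qed
      then show ?thesis by (auto simp: N1_def NN_def)
    qed
    show ?thesis
    proof (cases "sum_list w = n \<and> length w = k")
      case False
      then have "w \<notin> B" "w \<notin> B1" by (auto simp: B_def B1_def)
      then show ?thesis using R1 R2 L1 L2 L3 False by simp
    next
      case C: True
      then obtain a b t where w: "w = a # b # t" using \<open>k \<ge> 2\<close>
        by (metis One_nat_def Suc_1 Suc_le_length_iff)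
      have inB: "w \<in> B" using C True by (auto simp: B_def Suc_le_eq)
      have inB1: "w \<in> B1 \<longleftrightarrow> b = 1" using C True w by (auto simp: B1_def Suc_le_eq)
      have tk: "take (k - 1) w = a # butlast (b # t)"
      proof -
        have kk: "k = length t + 2" using C w by simp
        show ?thesis using w by (simp add: kk butlast_conv_take)
      qed
      have "?L w = Cf (a # butlast (b # t)) - Cf (butlast (b # t)) - (if b = 1 then 1 else 0)"
        using L1 L2 L3 C N1_main[of a b t] True w u_def by simp
      then show ?thesis using R1 R2 inB inB1 tk by (simp add: c_def)
    qed
  qed
qed

end
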